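(* Let $d\ge 1$, $\gamma>0$, and let $f_I\in C^1(\mathbb{R}^d)\cap L^\infty(\mathbb{R}^d)$ be nonnegative, not identically zero, radially symmetric and radially non-increasing (i.e. $f_I(x)=\tilde f_I(|x|)$ with $\tilde f_I$ non-increasing on $[0,\infty)$). Set $t^*=\bigl(\gamma d\,\max f_I^\gamma\bigr)^{-1}$. Then there exists a classical solution $\rho\in C^1(\mathbb{R}^d\times[0,t^* ))$ of $$\partial_t\rho-(1+\gamma)\rho^{\gamma}\,x\cdot\nabla\rho=d\,\rho^{1+\gamma},\qquad \rho(x,0)=f_I(x),$$ (equivalently of $\partial_t\rho-\nabla\cdot(x\rho^{1+\gamma})=0$), given along characteristics by $\rho\bigl(x_0(1-\gamma d f_I^\gamma(x_0)t)^{(1+\gamma)/(\gamma d)},t\bigr)=f_I(x_0)\,(1-\gamma d f_I^\gamma(x_0)t)^{-1/\gamma}$, and this solution blows up at the origin at time $t^*$: $$\lim_{(x,t)\to(0,t^* )}\rho(x,t)=+\infty .$$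
   Context: The parameter $\gamma>0$ is fixed. This concerns the equation $\partial_t\rho-\nabla\cdot(x\rho^{1+\gamma})=0$ on $\mathbb{R}^d\times[0,\infty)$, written in non-conservative form for smooth solutions. *)

theory Defs
  imports "HOL-Analysis.Analysis"
begin

definition C1_fun :: "(real^'n \<Rightarrow> real) \<Rightarrow> bool" where
  "C1_fun f \<longleftrightarrow> (\<exists>g :: real^'n \<Rightarrow> real^'n.
      (\<forall>x. (f has_derivative (\<lambda>h. g x \<bullet> h)) (at x)) \<and> continuous_on UNIV g)"

definition radial_nonincr :: "(real^'n \<Rightarrow> real) \<Rightarrow> bool" where
  "radial_nonincr f \<longleftrightarrow> (\<exists>ft :: real \<Rightarrow> real.
      (\<forall>x. f x = ft (norm x)) \<and> (\<forall>r s. 0 \<le> r \<longrightarrow> r \<le> s \<longrightarrow> ft s \<le> ft r))"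

definition C1_on_strip :: "(real^'n \<Rightarrow> real \<Rightarrow> real) \<Rightarrow> (real^'n \<Rightarrow> real \<Rightarrow> real)
    \<Rightarrow> (real^'n \<Rightarrow> real \<Rightarrow> real^'n) \<Rightarrow> real \<Rightarrow> bool" where
  "C1_on_strip rho rt gr T \<longleftrightarrow>
     (\<forall>x t. 0 \<le> t \<and> t < T \<longrightarrow>
        ((\<lambda>(y,s). rho y s) has_derivative (\<lambda>(h,k). gr x t \<bullet> h + rt x t * k))
          (at (x,t) within (UNIV \<times> {0..<T}))) \<and>
     continuous_on (UNIV \<times> {0..<T}) (\<lambda>(y,s). rt y s) \<and>
     continuous_on (UNIV \<times> {0..<T}) (\<lambda>(y,s). gr y s)"

end

theory Submission
  imports Defs
begin

lemma implicit_scalar: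
  fixes \<sigma> :: "'a::real_normed_vector \<Rightarrow> real" and E :: "real \<times> 'a \<Rightarrow> real"
  assumes dE: "(E has_derivative DE) (at (\<sigma> p0, p0))"
    and ne: "DE (1,0) \<noteq> 0"
    and zero: "\<And>p. p \<in> S \<Longrightarrow> E (\<sigma> p, p) = 0"
    and p0: "p0 \<in> S"
    and cont: "continuous (at p0 within S) \<sigma>"
  shows "(\<sigma> has_derivative (\<lambda>h. - DE (0,h) / DE (1,0))) (at p0 within S)"
proof -
  have bl: "bounded_linear DE" using dE by (simp add: has_derivative_bounded_linear)
  interpret DE: bounded_linear DE by (rule bl)
  have split: "DE (a,h) = a * DE (1,0) + DE (0,h)" for a h
  proof -
    have "DE (a,h) = DE (a *\<^sub>R (1,0) + (0,h))" by simp
    also have "\<dots> = a * DE (1,0) + DE (0,h)" by (simp only: DE.add DE.scale real_scaleR_def)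
    finally show ?thesis .
  qed
  define ea where "ea = DE (1,0)"
  define L where "L = (\<lambda>h. DE (0,h))"
  have blL: "bounded_linear L" unfolding L_def
    by (rule bounded_linear_compose[OF bl]) (simp add: bounded_linear_Pair)
  obtain K where K: "K > 0" "\<And>h. norm (L h) \<le> norm h * K"
    using bounded_linear.pos_bounded[OF blL] by blast
  have aea: "abs ea > 0" using ne ea_def by simp
  show ?thesis
    unfolding has_derivative_within_alt
  proof (intro conjI allI impI)
    show "bounded_linear (\<lambda>h. - DE (0, h) / DE (1, 0))"
      using bounded_linear_compose[OF bounded_linear_divide[of "DE(1,0)"] bounded_linear_minus[OF blL]] unfolding L_def .
  next
    fix e :: real assume e: "e > 0"
    define C where "C = 2 * (K + abs ea) / abs ea + 1"
    have C: "C > 0" unfolding C_def using K aea by (auto intro!: add_pos_nonneg)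
    define \<eta> where "\<eta> = min (abs ea / 2) (e * abs ea / C)"
    have \<eta>: "\<eta> > 0" unfolding \<eta>_def using aea e C by auto
    obtain d1 where d1: "d1 > 0" and
      d1E: "\<And>y. norm (y - (\<sigma> p0, p0)) < d1 \<Longrightarrow>
         norm (E y - E (\<sigma> p0, p0) - DE (y - (\<sigma> p0, p0))) \<le> \<eta> * norm (y - (\<sigma> p0, p0))"
      using dE \<eta> unfolding has_derivative_within_alt by (metis UNIV_I)
    obtain d2 where d2: "d2 > 0" and
      d2s: "\<And>p. p \<in> S \<Longrightarrow> dist p p0 < d2 \<Longrightarrow> dist (\<sigma> p) (\<sigma> p0) < d1/2"
      using cont d1 unfolding continuous_within_eps_delta by (metis half_gt_zero)
    show "\<exists>d>0. \<forall>y\<in>S. norm (y - p0) < d \<longrightarrow>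
        norm (\<sigma> y - \<sigma> p0 - - DE (0, y - p0) / DE (1, 0)) \<le> e * norm (y - p0)"
    proof (intro exI[of _ "min (d1/2) d2"] conjI ballI impI)
      show "min (d1/2) d2 > 0" using d1 d2 by auto
    next
      fix p assume pS: "p \<in> S" and pd: "norm (p - p0) < min (d1/2) d2"
      define \<delta> where "\<delta> = \<sigma> p - \<sigma> p0"
      define h where "h = p - p0"
      have sd: "abs \<delta> < d1/2" using d2s[OF pS] pd unfolding \<delta>_def dist_norm by auto
      have nrm: "norm ((\<delta>, h)) \<le> abs \<delta> + norm h"
      proof -
        have "norm ((\<delta>, h)) = norm ((\<delta>, 0) + (0, h))" by simp
        also have "\<dots> \<le> norm ((\<delta>, 0::'a)) + norm ((0::real, h))" by (rule norm_triangle_ineq)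
        finally show ?thesis by (simp add: norm_Pair)
      qed
      have "norm ((\<delta>, h)) < d1" using nrm sd pd unfolding h_def by auto
      then have "norm (E (\<sigma> p, p) - E (\<sigma> p0, p0) - DE ((\<delta>, h))) \<le> \<eta> * norm ((\<delta>, h))"
        using d1E[of "(\<sigma> p, p)"] unfolding \<delta>_def h_def by simp
      then have m0: "abs (ea * \<delta> + L h) \<le> \<eta> * norm ((\<delta>, h))"
        using zero[OF pS] zero[OF p0] split[of \<delta> h] unfolding ea_def L_def
        by (simp add: mult.commute)
      have main: "abs (ea * \<delta> + L h) \<le> \<eta> * (abs \<delta> + norm h)"
        using m0 mult_left_mono[OF nrm, of \<eta>] \<eta> by linarith
      have Lh: "abs (L h) \<le> K * norm h" using K(2)[of h] by (simp add: mult.commute)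
      have "abs ea * abs \<delta> \<le> K * norm h + \<eta> * (abs \<delta> + norm h)"
      proof -
        have "abs (ea * \<delta>) \<le> abs (ea * \<delta> + L h) + abs (L h)" by arith
        then show ?thesis using main Lh by (simp add: abs_mult)
      qed
      then have "(abs ea - \<eta>) * abs \<delta> \<le> (K + \<eta>) * norm h" by (simp add: algebra_simps)
      moreover have "\<eta> \<le> abs ea / 2" unfolding \<eta>_def by (rule min.cobounded1)
      then have "abs ea - \<eta> \<ge> abs ea / 2" by simp
      moreover have "abs ea / 2 * abs \<delta> \<le> (abs ea - \<eta>) * abs \<delta>"
        using calculation(2) by (rule mult_right_mono) simp
      ultimately have "abs ea / 2 * abs \<delta> \<le> (K + \<eta>) * norm h" by linarith
      then have "abs \<delta> \<le> (K + \<eta>) * norm h / (abs ea / 2)" using aea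
        by (subst pos_le_divide_eq) (auto simp: mult.commute)
      also have "(K + \<eta>) * norm h / (abs ea / 2) = 2 * (K + \<eta>) / abs ea * norm h" by simp
      finally have dl: "abs \<delta> \<le> 2 * (K + \<eta>) / abs ea * norm h" .
      have "2 * (K + \<eta>) / abs ea \<le> 2 * (K + abs ea) / abs ea"
        using aea \<eta>_def by (intro divide_right_mono) auto
      then have dl2: "abs \<delta> + norm h \<le> C * norm h"
      proof -
        have "2 * (K + \<eta>) / abs ea * norm h \<le> 2 * (K + abs ea) / abs ea * norm h"
          using \<open>2 * (K + \<eta>) / abs ea \<le> 2 * (K + abs ea) / abs ea\<close> by (rule mult_right_mono) simp
        moreover have "C * norm h = 2 * (K + abs ea) / abs ea * norm h + norm h"
          unfolding C_def by (simp add: distrib_right)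
        ultimately show ?thesis using dl by linarith
      qed
      have "\<delta> + L h / ea = (ea * \<delta> + L h) / ea" using aea by (simp add: field_simps)
      then have "abs (\<delta> + L h / ea) = abs (ea * \<delta> + L h) / abs ea" by simp
      also have "\<dots> \<le> \<eta> * (abs \<delta> + norm h) / abs ea"
        using main aea by (simp add: divide_right_mono)
      also have "\<dots> \<le> \<eta> * (C * norm h) / abs ea"
        using dl2 \<eta> aea by (intro divide_right_mono mult_left_mono) auto
      also have "\<dots> \<le> (e * abs ea / C) * (C * norm h) / abs ea"
        using \<eta>_def aea C by (intro divide_right_mono mult_right_mono) auto
      also have "\<dots> = e * norm h" using aea C by simp
      finally show "norm (\<sigma> p - \<sigma> p0 - - DE (0, p - p0) / DE (1, 0)) \<le> e * norm (p - p0)"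
        unfolding \<delta>_def h_def L_def ea_def by simp
    qed
  qed
qed


lemma alg:
  fixes F Fg s sa sg D v gx k c t \<gamma> \<alpha> ds :: real
  assumes nz: "F \<noteq> 0" "s \<noteq> 0" "D \<noteq> 0" "\<gamma> \<noteq> 0"
    and Dd: "D = 1 - c * t * \<gamma> * \<alpha> * (Fg/F) * (sa/s) * gx" and eq: "c * t * Fg = 1 - s"
    and ds: "ds = (-(c * k * Fg) - c * t * \<gamma> * Fg * (sa * v)/F)/D"
  shows "F * (sg * (ds * (-1/\<gamma>)/s)) + (sa * v + (sa * (ds * (-\<alpha>)/s)) * gx) * sg
       = (sg * sa/s/D) * v + c * Fg * (\<alpha> * (sg * sa/s) * gx + (F/\<gamma>) * (sg/s))/D * k"
proof -
  have "s * D = s - c * t * \<gamma> * \<alpha> * Fg * sa * gx/F"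
    using Dd nz by (simp add: field_simps)
  then have key: "s * D = 1 - c * t * Fg - c * t * \<gamma> * \<alpha> * Fg * sa * gx/F"
    using eq by linarith
  have "F * (sg * (ds * (-1/\<gamma>)/s)) + (sa * v + (sa * (ds * (-\<alpha>)/s)) * gx) * sg
      = sg * sa * v + ds * (-(F * sg/(\<gamma> * s)) - \<alpha> * sa * gx * sg/s)"
    using nz by (simp add: field_simps)
  also have "\<dots> = sg * sa * v + (c * k * Fg + c * t * \<gamma> * Fg * (sa * v)/F)/D * (F * sg/(\<gamma> * s) + \<alpha> * sa * gx * sg/s)"
    unfolding ds using nz by (simp add: field_simps)
  also have "\<dots> = (sg * sa/s/D) * v * (s * D + c * t * Fg + c * t * \<gamma> * \<alpha> * Fg * sa * gx/F)
        + c * Fg * (\<alpha> * (sg * sa/s) * gx + (F/\<gamma>) * (sg/s))/D * k"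
    using nz by (simp add: field_simps)
  also have "s * D + c * t * Fg + c * t * \<gamma> * \<alpha> * Fg * sa * gx/F = 1" using key by simp
  finally show ?thesis by simp
qed

lemma alg2:
  fixes F Fg s sa sg D gx c t \<gamma> \<alpha> d :: real
  assumes nz: "F \<noteq> 0" "s \<noteq> 0" "D \<noteq> 0" "\<gamma> \<noteq> 0"
    and Dd: "D = 1 - c * t * \<gamma> * \<alpha> * (Fg/F) * (sa/s) * gx" and eq: "c * t * Fg = 1 - s"
    and ca: "c * \<alpha> = 1 + \<gamma>" and cd: "c = \<gamma> * d"
  shows "c * Fg * (\<alpha> * (sg * sa / s) * gx + (F / \<gamma>) * (sg / s)) / D - (1 + \<gamma>) * (Fg / s) * ((sg * sa / s / D) * gx)
       = d * (F * sg) * (Fg / s)"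
proof -
  have L: "c * Fg * (\<alpha> * (sg * sa / s) * gx + (F / \<gamma>) * (sg / s)) / D - (1 + \<gamma>) * (Fg / s) * ((sg * sa / s / D) * gx)
     = sg / (s * D) * ((c * \<alpha>) * Fg * sa * gx + (c / \<gamma>) * Fg * F - (1 + \<gamma>) * Fg * sa * gx / s)"
    using nz by (simp add: field_simps)
  have R: "d * (F * sg) * (Fg / s) = sg / (s * D) * (d * F * Fg * D)" using nz by (simp add: field_simps)
  have D2: "d * F * Fg * D = d * F * Fg - (c * \<alpha>) * (\<gamma> * d * t * Fg) * Fg * sa * gx / s"
    unfolding Dd using nz by (simp add: field_simps)
  have e2: "\<gamma> * d * t * Fg = 1 - s" using eq cd by (simp add: algebra_simps)
  have c2: "c / \<gamma> = d" using cd nz by simp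
  have "(c * \<alpha>) * Fg * sa * gx + (c / \<gamma>) * Fg * F - (1 + \<gamma>) * Fg * sa * gx / s = d * F * Fg * D"
    unfolding D2 e2 c2 ca using nz by (simp add: field_simps)
  then show ?thesis using L R by simp
qed

locale rad =
  fixes f :: "real^'n \<Rightarrow> real" and \<gamma> :: real and G :: "real^'n \<Rightarrow> real^'n"
    and d c \<alpha> M T :: real
  assumes gpos: "\<gamma> > 0"
    and fder: "\<And>x. (f has_derivative (\<lambda>h. G x \<bullet> h)) (at x)"
    and Gcont: "continuous_on UNIV G"
    and fnn: "\<And>x. f x \<ge> 0"
    and fmono: "\<And>x y. norm x \<le> norm y \<Longrightarrow> f y \<le> f x"
    and f0: "f 0 > 0"
    and d_def: "d = real CARD('n)"
    and c_def: "c = \<gamma> * d"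
    and \<alpha>_def: "\<alpha> = (1 + \<gamma>) / c"
    and M_def: "M = f 0"
    and T_def: "T = 1 / (c * M powr \<gamma>)"
begin

lemma d_pos: "d \<ge> 1" unfolding d_def by (simp add: Suc_le_eq)
lemma c_pos: "c > 0" unfolding c_def using gpos d_pos by simp
lemma \<alpha>_pos: "\<alpha> > 0" unfolding \<alpha>_def using gpos c_pos by simp
lemma c\<alpha>: "c * \<alpha> = 1 + \<gamma>" unfolding \<alpha>_def using c_pos by simp
lemma M_pos: "M > 0" unfolding M_def using f0 .
lemma f_le_M: "f x \<le> M" unfolding M_def by (rule fmono) simp
lemma Mg_pos: "M powr \<gamma> > 0" using M_pos by simp
lemma T_pos: "T > 0" unfolding T_def using c_pos Mg_pos by simp
lemma cTM: "c * T * M powr \<gamma> = 1" unfolding T_def using c_pos Mg_pos by simp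

lemma ctM_lt: assumes "0 \<le> t" "t < T" shows "c * t * M powr \<gamma> < 1"
proof -
  have "c * t * M powr \<gamma> < c * T * M powr \<gamma>"
    using assms c_pos Mg_pos by (simp add: mult_strict_right_mono)
  then show ?thesis using cTM by simp
qed

lemma f_cont: "continuous_on UNIV f"
  using fder by (meson has_derivative_continuous continuous_at_imp_continuous_on)

lemma fg_cont: "continuous_on UNIV (\<lambda>y. f y powr \<gamma>)"
  by (rule continuous_on_powr'[OF f_cont continuous_on_const]) (use fnn gpos in auto)

lemma fg_le: "f y powr \<gamma> \<le> M powr \<gamma>"
  using f_le_M fnn gpos by (simp add: powr_mono2)

lemma fg_nn: "f y powr \<gamma> \<ge> 0" by simp

lemma G_radial: "G x \<bullet> x \<le> 0"
proof (rule ccontr)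
  assume "\<not> G x \<bullet> x \<le> 0"
  then have pos: "G x \<bullet> x > 0" by simp
  have "((\<lambda>s. f ((1 + s) *\<^sub>R x)) has_real_derivative (G x \<bullet> x)) (at 0)"
  proof -
    have "((\<lambda>s::real. (1 + s) *\<^sub>R x) has_derivative (\<lambda>s. s *\<^sub>R x)) (at 0)"
      by (auto intro!: derivative_eq_intros)
    from has_derivative_compose[OF this, of f "\<lambda>h. G x \<bullet> h"] fder[of x]
    have "((\<lambda>s. f ((1 + s) *\<^sub>R x)) has_derivative (\<lambda>s. G x \<bullet> (s *\<^sub>R x))) (at 0)" by simp
    moreover have "(\<lambda>s. G x \<bullet> (s *\<^sub>R x)) = (*) (G x \<bullet> x)" by (auto simp: mult.commute)
    ultimately show ?thesis unfolding has_field_derivative_def by simp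
  qed
  from DERIV_pos_inc_right[OF this pos] obtain e where e: "e > 0"
    "\<And>h. h > 0 \<Longrightarrow> h < e \<Longrightarrow> f ((1 + 0) *\<^sub>R x) < f ((1 + (0 + h)) *\<^sub>R x)" by auto
  have "f x < f ((1 + e/2) *\<^sub>R x)" using e(2)[of "e/2"] e(1) by simp
  moreover have "f ((1 + e/2) *\<^sub>R x) \<le> f x"
  proof (rule fmono)
    have "1 * norm x \<le> (1 + e/2) * norm x" using e(1) by (intro mult_right_mono) auto
    then show "norm x \<le> norm ((1 + e / 2) *\<^sub>R x)" using e(1) by simp
  qed
  ultimately show False by simp
qed

lemma G_zero: assumes "f x = 0" shows "G x = 0"
proof -
  have "(\<lambda>h. G x \<bullet> h) = (\<lambda>v. 0)"
    by (rule differential_zero_maxmin[of x UNIV f]) (use fder fnn assms in auto)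
  then have "G x \<bullet> G x = 0" by metis
  then show ?thesis by simp
qed

definition E :: "real \<Rightarrow> real^'n \<Rightarrow> real \<Rightarrow> real" where
  "E s x t = s - 1 + c * t * f (s powr (-\<alpha>) *\<^sub>R x) powr \<gamma>"

lemma E_mono: assumes "0 < s'" "s' \<le> s" "0 \<le> t"
  shows "E s x t - E s' x t \<ge> s - s'"
proof -
  have "s powr (-\<alpha>) \<le> s' powr (-\<alpha>)" using assms \<alpha>_pos by (simp add: powr_mono2')
  then have "norm (s powr (-\<alpha>) *\<^sub>R x) \<le> norm (s' powr (-\<alpha>) *\<^sub>R x)"
    by (simp add: mult_right_mono)
  then have "f (s' powr (-\<alpha>) *\<^sub>R x) \<le> f (s powr (-\<alpha>) *\<^sub>R x)" by (rule fmono)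
  then have "f (s' powr (-\<alpha>) *\<^sub>R x) powr \<gamma> \<le> f (s powr (-\<alpha>) *\<^sub>R x) powr \<gamma>"
    using fnn gpos by (simp add: powr_mono2)
  then have "c * t * f (s' powr (-\<alpha>) *\<^sub>R x) powr \<gamma> \<le> c * t * f (s powr (-\<alpha>) *\<^sub>R x) powr \<gamma>"
    using c_pos assms by (simp add: mult_left_mono)
  then show ?thesis unfolding E_def by simp
qed

lemma E_cont_s: assumes "a > 0"
  shows "continuous_on {a..b} (\<lambda>s. E s x t)"
proof -
  have "continuous_on {a..b} (\<lambda>s. s powr (-\<alpha>) *\<^sub>R x)"
    using assms by (intro continuous_intros) auto
  then have "continuous_on {a..b} (\<lambda>s. f (s powr (-\<alpha>) *\<^sub>R x) powr \<gamma>)"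
    by (rule continuous_on_compose2[OF fg_cont]) auto
  then show ?thesis unfolding E_def
    by (intro continuous_on_add continuous_on_diff continuous_on_mult_left continuous_on_id continuous_on_const)
qed

lemma E_root_ex: assumes "0 \<le> t" "t < T" shows "\<exists>s. 0 < s \<and> E s x t = 0"
proof -
  define a where "a = 1 - c * t * M powr \<gamma>"
  have a: "a > 0" using ctM_lt[OF assms] a_def by simp
  have "E a x t = c * t * (f (a powr (-\<alpha>) *\<^sub>R x) powr \<gamma> - M powr \<gamma>)"
    unfolding E_def a_def by (simp add: algebra_simps)
  also have "\<dots> \<le> 0" using c_pos assms fg_le
    by (intro mult_nonneg_nonpos) auto
  finally have Ea: "E a x t \<le> 0" .
  have E1: "E 1 x t \<ge> 0" unfolding E_def using c_pos assms by simp
  have "a \<le> 1" unfolding a_def using c_pos assms Mg_pos by simp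
  from IVT'[of "\<lambda>s. E s x t", OF Ea E1 this E_cont_s[OF a]]
  obtain s where "a \<le> s" "E s x t = 0" by blast
  then show ?thesis using a by (intro exI[of _ s]) auto
qed

lemma E_root_unique: assumes "0 \<le> t" "0 < s1" "0 < s2" "E s1 x t = 0" "E s2 x t = 0"
  shows "s1 = s2"
proof (rule ccontr)
  assume "s1 \<noteq> s2"
  then consider "s1 < s2" | "s2 < s1" by linarith
  then show False
  proof cases
    case 1 then show False using E_mono[of s1 s2 t x] assms by simp
  next
    case 2 then show False using E_mono[of s2 s1 t x] assms by simp
  qed
qed

definition sig :: "real^'n \<Rightarrow> real \<Rightarrow> real" where
  "sig x t = (THE s. 0 < s \<and> E s x t = 0)"

lemma sig: assumes "0 \<le> t" "t < T" shows "0 < sig x t" "E (sig x t) x t = 0"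
proof -
  have "0 < sig x t \<and> E (sig x t) x t = 0"
    unfolding sig_def
    by (rule theI') (use E_root_ex[OF assms] E_root_unique assms in blast)
  then show "0 < sig x t" "E (sig x t) x t = 0" by auto
qed

lemma sig_eq: assumes "0 \<le> t" "t < T" "0 < s" "E s x t = 0" shows "sig x t = s"
  using E_root_unique[OF assms(1) sig(1)[OF assms(1,2)] assms(3) sig(2)[OF assms(1,2)] assms(4)] .

definition X :: "real^'n \<Rightarrow> real \<Rightarrow> real^'n" where
  "X x t = sig x t powr (-\<alpha>) *\<^sub>R x"

definition F :: "real^'n \<Rightarrow> real \<Rightarrow> real" where
  "F x t = f (X x t)"

lemma sig_eqn: assumes "0 \<le> t" "t < T" shows "c * t * F x t powr \<gamma> = 1 - sig x t"
proof -
  have "sig x t - 1 + c * t * F x t powr \<gamma> = 0"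
    using sig(2)[OF assms, of x] unfolding E_def F_def X_def .
  then show ?thesis by linarith
qed

lemma sig_le1: assumes "0 \<le> t" "t < T" shows "sig x t \<le> 1"
  using sig_eqn[OF assms, of x] c_pos assms by (smt (verit) mult_nonneg_nonneg fg_nn F_def)

lemma sig_ge: assumes "0 \<le> t" "t < T" shows "1 - c * t * M powr \<gamma> \<le> sig x t"
proof -
  have "c * t * F x t powr \<gamma> \<le> c * t * M powr \<gamma>"
    using c_pos assms fg_le unfolding F_def by (intro mult_left_mono) auto
  then show ?thesis using sig_eqn[OF assms, of x] by simp
qed

lemma sig_0: "sig x 0 = 1"
  by (rule sig_eq) (use T_pos in \<open>auto simp: E_def\<close>)

lemma normX: assumes "0 \<le> t" "t < T" shows "norm x \<le> norm (X x t)"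
proof -
  have "1 \<le> sig x t powr (-\<alpha>)"
  proof -
    have p: "sig x t powr \<alpha> > 0" using sig(1)[OF assms, of x] by simp
    have "sig x t powr \<alpha> \<le> 1 powr \<alpha>"
      using sig(1)[OF assms, of x] sig_le1[OF assms, of x] \<alpha>_pos by (intro powr_mono2) auto
    then have "sig x t powr \<alpha> \<le> 1" by simp
    then show ?thesis using p by (simp add: powr_minus field_simps)
  qed
  then show ?thesis unfolding X_def by (simp add: mult_le_cancel_right1)
qed

abbreviation "Sg \<equiv> (UNIV :: (real^'n) set) \<times> {0..<T}"

lemma within_Sg: "eventually (\<lambda>p. p \<in> A) (at p0 within A)"
  by (simp add: eventually_at_filter)

lemma cont_univ_within: fixes g :: "(real^'n) \<times> real \<Rightarrow> real" shows "continuous_on UNIV g \<Longrightarrow> (g \<longlongrightarrow> g p0) (at p0 within A)"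
proof -
  assume "continuous_on UNIV g"
  then have "isCont g p0" using continuous_on_eq_continuous_at open_UNIV by blast
  then have "continuous (at p0 within A) g" by (rule continuous_at_imp_continuous_within)
  then show ?thesis unfolding continuous_within .
qed

lemma E_cont_p: assumes "s > 0" shows "continuous_on UNIV (\<lambda>p. E s (fst p) (snd p))"
proof -
  have "continuous_on UNIV (\<lambda>p::(real^'n) \<times> real. s powr (-\<alpha>) *\<^sub>R fst p)"
    by (intro continuous_intros)
  then have "continuous_on UNIV (\<lambda>p::(real^'n) \<times> real. f (s powr (-\<alpha>) *\<^sub>R fst p) powr \<gamma>)"
    by (rule continuous_on_compose2[OF fg_cont]) auto
  then show ?thesis unfolding E_def
    by (intro continuous_on_add continuous_on_diff continuous_on_mult continuous_on_const continuous_on_snd continuous_on_id)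
qed

lemma sig_cont: "continuous_on Sg (\<lambda>p. sig (fst p) (snd p))"
  unfolding continuous_on_eq_continuous_within
proof
  fix p0 :: "(real^'n) \<times> real" assume p0: "p0 \<in> Sg"
  obtain x0 t0 where pe: "p0 = (x0, t0)" by (cases p0)
  have t0: "0 \<le> t0" "t0 < T" using p0 pe by auto
  define s0 where "s0 = sig x0 t0"
  have s0: "s0 > 0" "E s0 x0 t0 = 0" using sig[OF t0] s0_def by auto
  show "continuous (at p0 within Sg) (\<lambda>p. sig (fst p) (snd p))"
    unfolding continuous_within tendsto_iff
  proof (intro allI impI)
    fix \<epsilon> :: real assume \<epsilon>: "\<epsilon> > 0"
    define e where "e = min \<epsilon> (s0/2)"
    have e: "e > 0" "e \<le> \<epsilon>" "e < s0" using \<epsilon> s0 e_def by auto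
    have lo: "E (s0 - e) x0 t0 < 0" using E_mono[of "s0-e" s0 t0 x0] e s0 t0 by simp
    have hi: "E (s0 + e) x0 t0 > 0" using E_mono[of s0 "s0+e" t0 x0] e s0 t0 by simp
    have ev1: "eventually (\<lambda>p. E (s0 - e) (fst p) (snd p) < 0) (at p0 within Sg)"
    proof -
      have "((\<lambda>p. E (s0-e) (fst p) (snd p)) \<longlongrightarrow> E (s0-e) x0 t0) (at p0 within Sg)"
        using cont_univ_within[OF E_cont_p[of "s0-e"], of p0 Sg] pe e by simp
      from order_tendstoD(2)[OF this lo] show ?thesis .
    qed
    have ev2: "eventually (\<lambda>p. E (s0 + e) (fst p) (snd p) > 0) (at p0 within Sg)"
    proof -
      have "((\<lambda>p. E (s0+e) (fst p) (snd p)) \<longlongrightarrow> E (s0+e) x0 t0) (at p0 within Sg)"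
        using cont_univ_within[OF E_cont_p[of "s0+e"], of p0 Sg] pe e s0 by simp
      from order_tendstoD(1)[OF this hi] show ?thesis .
    qed
    show "eventually (\<lambda>p. dist (sig (fst p) (snd p)) (sig (fst p0) (snd p0)) < \<epsilon>) (at p0 within Sg)"
      using ev1 ev2 within_Sg
    proof eventually_elim
      case (elim p)
      obtain x t where p: "p = (x, t)" by (cases p)
      have t: "0 \<le> t" "t < T" using elim p by auto
      have sp: "sig x t > 0" "E (sig x t) x t = 0" using sig[OF t] by auto
      have a: "sig x t > s0 - e"
      proof (rule ccontr)
        assume na: "\<not> sig x t > s0 - e"
        then have "E (s0 - e) x t - E (sig x t) x t \<ge> s0 - e - sig x t"
          using E_mono[of "sig x t" "s0 - e" t x] sp t by simp
        then show False using elim p sp na by simp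
      qed
      have b: "sig x t < s0 + e"
      proof (rule ccontr)
        assume nb: "\<not> sig x t < s0 + e"
        then have "E (sig x t) x t - E (s0 + e) x t \<ge> sig x t - (s0 + e)"
          using E_mono[of "s0 + e" "sig x t" t x] sp t s0 e by simp
        then show False using elim p sp nb by simp
      qed
      show ?case using a b e p pe s0_def by (simp add: dist_real_def abs_less_iff)
    qed
  qed
qed

lemma fder_chain: "(g has_derivative g') (at y within A) \<Longrightarrow>
   ((\<lambda>z. f (g z)) has_derivative (\<lambda>h. G (g y) \<bullet> g' h)) (at y within A)"
  by (rule has_derivative_compose[OF _ fder])

definition Ep :: "real \<times> ((real^'n) \<times> real) \<Rightarrow> real" where
  "Ep q = E (fst q) (fst (snd q)) (snd (snd q))"


lemma Ep_deriv:
  assumes s0: "s0 > 0" and Fp: "f (s0 powr (-\<alpha>) *\<^sub>R x0) > 0"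
  shows "(Ep has_derivative (\<lambda>(a,(h,k)). a + c * k * f (s0 powr (-\<alpha>) *\<^sub>R x0) powr \<gamma>
      + c * t0 * \<gamma> * (f (s0 powr (-\<alpha>) *\<^sub>R x0) powr \<gamma> / f (s0 powr (-\<alpha>) *\<^sub>R x0))
        * (G (s0 powr (-\<alpha>) *\<^sub>R x0) \<bullet> ((a * (-\<alpha>) * (s0 powr (-\<alpha>) / s0)) *\<^sub>R x0 + s0 powr (-\<alpha>) *\<^sub>R h))))
     (at (s0, (x0, t0)))"
  unfolding Ep_def E_def
  apply (rule has_derivative_eq_rhs)
   apply ((rule derivative_eq_intros fder_chain refl has_derivative_ident has_derivative_const) | (simp add: s0 Fp; fail))+
  apply (rule ext) apply (clarsimp simp: inner_add_right algebra_simps divide_simps) done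

definition D :: "real^'n \<Rightarrow> real \<Rightarrow> real" where
  "D x t = 1 - c * t * \<gamma> * \<alpha> * (F x t powr \<gamma> / F x t) * (sig x t powr (-\<alpha>) / sig x t) * (G (X x t) \<bullet> x)"

lemma Gx_nonpos: assumes "0 \<le> t" "t < T" shows "G (X x t) \<bullet> x \<le> 0"
proof -
  have sp: "sig x t powr (-\<alpha>) > 0" using sig(1)[OF assms, of x] by simp
  have "G (X x t) \<bullet> X x t \<le> 0" by (rule G_radial)
  then have "sig x t powr (-\<alpha>) * (G (X x t) \<bullet> x) \<le> 0" unfolding X_def by simp
  then show ?thesis using sp by (simp add: mult_le_0_iff)
qed

lemma D_ge1: assumes "0 \<le> t" "t < T" shows "D x t \<ge> 1"
proof -
  have sp: "sig x t > 0" using sig(1)[OF assms, of x] by simp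
  define K where "K = c * t * \<gamma> * \<alpha> * (F x t powr \<gamma> / F x t) * (sig x t powr (-\<alpha>) / sig x t)"
  have "0 \<le> K"
    using c_pos gpos \<alpha>_pos assms sp fnn unfolding F_def K_def by simp
  then have "K * (G (X x t) \<bullet> x) \<le> 0"
    using Gx_nonpos[OF assms, of x] by (rule mult_nonneg_nonpos)
  moreover have "D x t = 1 - K * (G (X x t) \<bullet> x)" unfolding D_def K_def by simp
  ultimately show ?thesis by simp
qed

lemma sig_deriv:
  assumes t0: "0 \<le> t0" "t0 < T" and Fp: "F x0 t0 > 0"
  shows "((\<lambda>p. sig (fst p) (snd p)) has_derivative
     (\<lambda>hk. - (c * snd hk * F x0 t0 powr \<gamma> + c * t0 * \<gamma> * (F x0 t0 powr \<gamma> / F x0 t0)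
          * (sig x0 t0 powr (-\<alpha>) * (G (X x0 t0) \<bullet> fst hk))) / D x0 t0))
     (at (x0, t0) within Sg)"
proof -
  define s0 where "s0 = sig x0 t0"
  have s0: "s0 > 0" using sig(1)[OF t0] s0_def by simp
  have Fp': "f (s0 powr (-\<alpha>) *\<^sub>R x0) > 0" using Fp unfolding F_def X_def s0_def .
  define DE where "DE = (\<lambda>(a,(h::real^'n,k::real)). a + c * k * f (s0 powr (-\<alpha>) *\<^sub>R x0) powr \<gamma>
      + c * t0 * \<gamma> * (f (s0 powr (-\<alpha>) *\<^sub>R x0) powr \<gamma> / f (s0 powr (-\<alpha>) *\<^sub>R x0))
        * (G (s0 powr (-\<alpha>) *\<^sub>R x0) \<bullet> ((a * (-\<alpha>) * (s0 powr (-\<alpha>) / s0)) *\<^sub>R x0 + s0 powr (-\<alpha>) *\<^sub>R h)))"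
  have ED: "(Ep has_derivative DE) (at (s0, (x0, t0)))"
    using Ep_deriv[OF s0 Fp', of t0] unfolding DE_def .
  have DE1: "DE (1, 0) = D x0 t0"
    unfolding DE_def D_def F_def X_def s0_def by (simp add: algebra_simps zero_prod_def)
  have DE0: "DE (0, hk) = c * snd hk * F x0 t0 powr \<gamma> + c * t0 * \<gamma> * (F x0 t0 powr \<gamma> / F x0 t0)
          * (sig x0 t0 powr (-\<alpha>) * (G (X x0 t0) \<bullet> fst hk))" for hk
    unfolding DE_def F_def X_def s0_def by (cases hk) (simp add: algebra_simps)
  have "((\<lambda>p. sig (fst p) (snd p)) has_derivative (\<lambda>h. - DE (0,h) / DE (1,0))) (at (x0, t0) within Sg)"
  proof (rule implicit_scalar[where E = Ep])
    show "(Ep has_derivative DE) (at (sig (fst (x0, t0)) (snd (x0, t0)), (x0, t0)))"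
      using ED unfolding s0_def by simp
    show "DE (1,0) \<noteq> 0" using DE1 D_ge1[OF t0, of x0] by simp
    show "\<And>p. p \<in> Sg \<Longrightarrow> Ep (sig (fst p) (snd p), p) = 0"
      unfolding Ep_def using sig(2) by auto
    show "(x0, t0) \<in> Sg" using t0 by simp
    show "continuous (at (x0, t0) within Sg) (\<lambda>p. sig (fst p) (snd p))"
      using sig_cont t0 by (simp add: continuous_on_eq_continuous_within)
  qed
  then show ?thesis unfolding DE0 DE1 .
qed


definition rho :: "real^'n \<Rightarrow> real \<Rightarrow> real" where
  "rho x t = F x t * sig x t powr (-1/\<gamma>)"

definition gr :: "real^'n \<Rightarrow> real \<Rightarrow> real^'n" where
  "gr x t = (sig x t powr (-1/\<gamma>) * sig x t powr (-\<alpha>) / sig x t / D x t) *\<^sub>R G (X x t)"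

definition rt :: "real^'n \<Rightarrow> real \<Rightarrow> real" where
  "rt x t = c * F x t powr \<gamma> * (\<alpha> * (sig x t powr (-1/\<gamma>) * sig x t powr (-\<alpha>) / sig x t) * (G (X x t) \<bullet> x)
      + (F x t / \<gamma>) * (sig x t powr (-1/\<gamma>) / sig x t)) / D x t"

lemma rho_deriv_pos:
  assumes t0: "0 \<le> t0" "t0 < T" and Fp: "F x0 t0 > 0"
  shows "((\<lambda>p. rho (fst p) (snd p)) has_derivative (\<lambda>hk. gr x0 t0 \<bullet> fst hk + rt x0 t0 * snd hk))
     (at (x0, t0) within Sg)"
    unfolding rho_def F_def X_def
    apply (rule has_derivative_eq_rhs)
     apply ((rule derivative_eq_intros fder_chain refl has_derivative_ident has_derivative_const sig_deriv[OF t0 Fp, unfolded F_def X_def]) | (simp add: t0 sig(1)[OF t0]; fail))+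
    apply (rule ext)
    apply (simp only: fst_conv snd_conv mult_zero_left add_0_left inner_add_right inner_scaleR_right gr_def rt_def inner_scaleR_left F_def X_def)
    apply (rule alg[where t = t0])
          apply (use Fp in \<open>simp add: F_def X_def\<close>)
         apply (use sig(1)[OF t0, of x0] in simp)
        apply (use D_ge1[OF t0, of x0] in simp)
       apply (use gpos in simp)
      apply (simp add: D_def F_def X_def)
     apply (use sig_eqn[OF t0, of x0] in \<open>simp add: F_def X_def\<close>)
    apply (simp add: algebra_simps)
    done


lemma tends_of: "continuous_on Sg g \<Longrightarrow> p0 \<in> Sg \<Longrightarrow> (g \<longlongrightarrow> g p0) (at p0 within Sg)"
  unfolding continuous_on_def by blast

lemma sig_tends: "p0 \<in> Sg \<Longrightarrow> ((\<lambda>p. sig (fst p) (snd p)) \<longlongrightarrow> sig (fst p0) (snd p0)) (at p0 within Sg)"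
  using tends_of[OF sig_cont] by simp

lemma sig_pos_Sg: "p \<in> Sg \<Longrightarrow> sig (fst p) (snd p) > 0"
  by (cases p) (auto intro: sig(1))

lemma X_cont: "continuous_on Sg (\<lambda>p. X (fst p) (snd p))"
  unfolding X_def
  by (intro continuous_intros sig_cont) (intro ballI, drule sig_pos_Sg, simp)

lemma F_cont: "continuous_on Sg (\<lambda>p. F (fst p) (snd p))"
  unfolding F_def by (rule continuous_on_compose2[OF f_cont X_cont]) auto

lemma Fg_cont: "continuous_on Sg (\<lambda>p. F (fst p) (snd p) powr \<gamma>)"
  unfolding F_def by (rule continuous_on_compose2[OF fg_cont X_cont]) auto

lemma GX_cont: "continuous_on Sg (\<lambda>p. G (X (fst p) (snd p)))"
  by (rule continuous_on_compose2[OF Gcont X_cont]) auto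


lemma F0_facts: assumes t0: "0 \<le> t0" "t0 < T" and F0: "F x0 t0 = 0"
  shows "sig x0 t0 = 1" "X x0 t0 = x0" "f x0 = 0" "G x0 = 0" "gr x0 t0 = 0" "rt x0 t0 = 0" "rho x0 t0 = 0"
proof -
  show s1: "sig x0 t0 = 1" using sig_eqn[OF t0, of x0] F0 gpos by simp
  show X0: "X x0 t0 = x0" unfolding X_def s1 by simp
  show f0: "f x0 = 0" using F0 unfolding F_def X0 .
  show G0: "G x0 = 0" by (rule G_zero[OF f0])
  show "gr x0 t0 = 0" unfolding gr_def X0 G0 by simp
  show "rt x0 t0 = 0" unfolding rt_def F0 using gpos by simp
  show "rho x0 t0 = 0" unfolding rho_def F0 by simp
qed

lemma rho_deriv_zero:
  assumes t0: "0 \<le> t0" "t0 < T" and F0: "F x0 t0 = 0"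
  shows "((\<lambda>p. rho (fst p) (snd p)) has_derivative (\<lambda>hk. gr x0 t0 \<bullet> fst hk + rt x0 t0 * snd hk))
     (at (x0, t0) within Sg)"
proof -
  note FF = F0_facts[OF t0 F0]
  define K :: real where "K = (1/2) powr (-1/\<gamma>)"
  have K: "K > 0" unfolding K_def by simp
  have "((\<lambda>p. rho (fst p) (snd p)) has_derivative (\<lambda>hk. 0)) (at (x0, t0) within Sg)"
    unfolding has_derivative_within_alt
  proof (intro conjI allI impI)
    show "bounded_linear (\<lambda>hk::(real^'n) \<times> real. 0::real)" by simp
  next
    fix e :: real assume e: "e > 0"
    obtain d1 where d1: "d1 > 0" and
      d1f: "\<And>z. norm (z - x0) < d1 \<Longrightarrow> norm (f z - f x0 - G x0 \<bullet> (z - x0)) \<le> (e / K) * norm (z - x0)"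
      using fder[of x0] e K unfolding has_derivative_within_alt
      by (metis UNIV_I divide_pos_pos)
    have "eventually (\<lambda>p. sig (fst p) (snd p) > 1/2) (at (x0, t0) within Sg)"
      using order_tendstoD(1)[OF sig_tends[of "(x0,t0)"], of "1/2"] t0 FF(1) by simp
    then obtain d2 where d2: "d2 > 0" and
      d2s: "\<And>p. p \<in> Sg \<Longrightarrow> p \<noteq> (x0,t0) \<Longrightarrow> dist p (x0,t0) < d2 \<Longrightarrow> sig (fst p) (snd p) > 1/2"
      unfolding eventually_at by blast
    show "\<exists>d>0. \<forall>y\<in>Sg. norm (y - (x0, t0)) < d \<longrightarrow>
        norm (rho (fst y) (snd y) - rho (fst (x0, t0)) (snd (x0, t0)) - 0) \<le> e * norm (y - (x0, t0))"
    proof (intro exI[of _ "min d1 d2"] conjI ballI impI)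
      show "min d1 d2 > 0" using d1 d2 by simp
    next
      fix y assume yS: "y \<in> Sg" and yd: "norm (y - (x0, t0)) < min d1 d2"
      obtain x t where y: "y = (x, t)" by (cases y)
      have t: "0 \<le> t" "t < T" using yS y by auto
      show "norm (rho (fst y) (snd y) - rho (fst (x0, t0)) (snd (x0, t0)) - 0) \<le> e * norm (y - (x0, t0))"
      proof (cases "y = (x0, t0)")
        case True then show ?thesis using FF by simp
      next
        case False
        have nx: "norm (x - x0) \<le> norm (y - (x0, t0))" unfolding y using norm_fst_le[of "x - x0" "t - t0"] by simp
        have sh: "sig x t > 1/2" using d2s[OF yS False] yd y by (simp add: dist_norm)
        have fx: "f x \<le> (e / K) * norm (x - x0)" using d1f[of x] nx yd FF by simp
        have Fle: "F x t \<le> f x" unfolding F_def by (rule fmono[OF normX[OF t]])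
        have Fnn: "F x t \<ge> 0" unfolding F_def by (rule fnn)
        have sK: "sig x t powr (-1/\<gamma>) \<le> K" unfolding K_def
          by (rule powr_mono2') (use sh gpos in auto)
        have "rho x t \<le> (e / K) * norm (x - x0) * K"
          unfolding rho_def using Fle fx Fnn sK by (intro mult_mono) auto
        also have "\<dots> = e * norm (x - x0)" using K by simp
        also have "\<dots> \<le> e * norm (y - (x0, t0))" using nx e by simp
        finally have "rho x t \<le> e * norm (y - (x0, t0))" .
        moreover have "rho x t \<ge> 0" unfolding rho_def using Fnn by simp
        ultimately show ?thesis using y FF by simp
      qed
    qed
  qed
  then show ?thesis using FF by simp
qed


lemma D_ge1_Sg: "p \<in> Sg \<Longrightarrow> D (fst p) (snd p) \<ge> 1"
  by (cases p) (auto intro: D_ge1)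

lemma ev_Sg_D: "eventually (\<lambda>p. D (fst p) (snd p) \<ge> 1) (at p0 within Sg)"
  using within_Sg[of Sg p0] by eventually_elim (rule D_ge1_Sg)

lemma tends_quot_vec:
  fixes V :: "_ \<Rightarrow> real^'n"
  assumes "((\<lambda>p. A p *\<^sub>R V p) \<longlongrightarrow> 0) Fl" "eventually (\<lambda>p. Dv p \<ge> 1) Fl"
  shows "((\<lambda>p. (A p / Dv p) *\<^sub>R V p) \<longlongrightarrow> 0) Fl"
proof (rule Lim_null_comparison)
  show "eventually (\<lambda>p. norm ((A p / Dv p) *\<^sub>R V p) \<le> norm (A p *\<^sub>R V p)) Fl"
    using assms(2)
  proof eventually_elim
    case (elim p)
    have "abs (A p) * 1 \<le> abs (A p) * Dv p" using elim by (intro mult_left_mono) auto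
    then have "abs (A p / Dv p) \<le> abs (A p)" using elim by (simp add: abs_divide divide_le_eq)
    then have "abs (A p / Dv p) * norm (V p) \<le> abs (A p) * norm (V p)" by (rule mult_right_mono) simp
    then show ?case by (simp only: norm_scaleR)
  qed
  show "((\<lambda>p. norm (A p *\<^sub>R V p)) \<longlongrightarrow> 0) Fl" using tendsto_norm_zero[OF assms(1)] .
qed

lemma tends_quot_real:
  fixes N :: "_ \<Rightarrow> real"
  assumes "(N \<longlongrightarrow> 0) Fl" "eventually (\<lambda>p. Dv p \<ge> 1) Fl"
  shows "((\<lambda>p. N p / Dv p) \<longlongrightarrow> 0) Fl"
proof (rule Lim_null_comparison)
  show "eventually (\<lambda>p. norm (N p / Dv p) \<le> norm (N p)) Fl"
    using assms(2)
  proof eventually_elim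
    case (elim p)
    have "abs (N p) * 1 \<le> abs (N p) * Dv p" using elim by (intro mult_left_mono) auto
    then show ?case using elim by (simp add: abs_divide divide_le_eq)
  qed
  show "((\<lambda>p. norm (N p)) \<longlongrightarrow> 0) Fl" using tendsto_norm_zero[OF assms(1)] .
qed

lemma D_tends:
  assumes p0: "p0 \<in> Sg" and Fp: "F (fst p0) (snd p0) \<noteq> 0"
  shows "((\<lambda>p. D (fst p) (snd p)) \<longlongrightarrow> D (fst p0) (snd p0)) (at p0 within Sg)"
proof -
  note tS = tends_of[OF sig_cont p0] and tF = tends_of[OF F_cont p0] and tFg = tends_of[OF Fg_cont p0]
    and tG = tends_of[OF GX_cont p0]
  have s0: "sig (fst p0) (snd p0) \<noteq> 0" using sig_pos_Sg[OF p0] by simp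
  show ?thesis unfolding D_def
    by (intro tendsto_intros tS tF tFg tG s0 Fp) (use s0 Fp gpos in \<open>auto simp: F_def fnn\<close>)
qed

lemma gr_cont: "continuous_on Sg (\<lambda>p. gr (fst p) (snd p))"
  unfolding continuous_on_def
proof
  fix p0 assume p0: "p0 \<in> Sg"
  note tS = tends_of[OF sig_cont p0] and tF = tends_of[OF F_cont p0] and tFg = tends_of[OF Fg_cont p0]
    and tG = tends_of[OF GX_cont p0]
  have s0: "sig (fst p0) (snd p0) \<noteq> 0" using sig_pos_Sg[OF p0] by simp
  have t0: "0 \<le> snd p0" "snd p0 < T" using p0 by auto
  show "((\<lambda>p. gr (fst p) (snd p)) \<longlongrightarrow> gr (fst p0) (snd p0)) (at p0 within Sg)"
  proof (cases "F (fst p0) (snd p0) = 0")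
    case False
    have D0: "D (fst p0) (snd p0) \<noteq> 0" using D_ge1_Sg[OF p0] by simp
    show ?thesis unfolding gr_def
      by (intro tendsto_intros tS tF tFg tG s0 D_tends[OF p0 False] D0) (use s0 False gpos in \<open>auto simp: F_def fnn\<close>)
  next
    case True
    note FF = F0_facts[OF t0 True]
    have "((\<lambda>p. (sig (fst p) (snd p) powr (-1/\<gamma>) * sig (fst p) (snd p) powr (-\<alpha>) / sig (fst p) (snd p))
         *\<^sub>R G (X (fst p) (snd p))) \<longlongrightarrow>
       (sig (fst p0) (snd p0) powr (-1/\<gamma>) * sig (fst p0) (snd p0) powr (-\<alpha>) / sig (fst p0) (snd p0))
         *\<^sub>R G (X (fst p0) (snd p0))) (at p0 within Sg)"
      by (intro tendsto_intros tS tG s0) (use s0 gpos in \<open>auto simp: F_def fnn\<close>)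
    then have "((\<lambda>p. (sig (fst p) (snd p) powr (-1/\<gamma>) * sig (fst p) (snd p) powr (-\<alpha>) / sig (fst p) (snd p))
         *\<^sub>R G (X (fst p) (snd p))) \<longlongrightarrow> 0) (at p0 within Sg)"
      using FF by simp
    from tends_quot_vec[OF this ev_Sg_D]
    show ?thesis unfolding gr_def using FF by simp
  qed
qed

lemma rt_cont: "continuous_on Sg (\<lambda>p. rt (fst p) (snd p))"
  unfolding continuous_on_def
proof
  fix p0 assume p0: "p0 \<in> Sg"
  note tS = tends_of[OF sig_cont p0] and tF = tends_of[OF F_cont p0] and tFg = tends_of[OF Fg_cont p0]
    and tG = tends_of[OF GX_cont p0]
  have s0: "sig (fst p0) (snd p0) \<noteq> 0" using sig_pos_Sg[OF p0] by simp
  have t0: "0 \<le> snd p0" "snd p0 < T" using p0 by auto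
  show "((\<lambda>p. rt (fst p) (snd p)) \<longlongrightarrow> rt (fst p0) (snd p0)) (at p0 within Sg)"
  proof (cases "F (fst p0) (snd p0) = 0")
    case False
    have D0: "D (fst p0) (snd p0) \<noteq> 0" using D_ge1_Sg[OF p0] by simp
    show ?thesis unfolding rt_def
      by (intro tendsto_intros tS tF tFg tG s0 D_tends[OF p0 False] D0) (use s0 False gpos in \<open>auto simp: F_def fnn\<close>)
  next
    case True
    note FF = F0_facts[OF t0 True]
    have "((\<lambda>p. c * F (fst p) (snd p) powr \<gamma> * (\<alpha> * (sig (fst p) (snd p) powr (-1/\<gamma>) * sig (fst p) (snd p) powr (-\<alpha>) / sig (fst p) (snd p)) * (G (X (fst p) (snd p)) \<bullet> fst p)
      + (F (fst p) (snd p) / \<gamma>) * (sig (fst p) (snd p) powr (-1/\<gamma>) / sig (fst p) (snd p)))) \<longlongrightarrow>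
       c * F (fst p0) (snd p0) powr \<gamma> * (\<alpha> * (sig (fst p0) (snd p0) powr (-1/\<gamma>) * sig (fst p0) (snd p0) powr (-\<alpha>) / sig (fst p0) (snd p0)) * (G (X (fst p0) (snd p0)) \<bullet> fst p0)
      + (F (fst p0) (snd p0) / \<gamma>) * (sig (fst p0) (snd p0) powr (-1/\<gamma>) / sig (fst p0) (snd p0)))) (at p0 within Sg)"
      by (intro tendsto_intros tS tF tFg tG s0) (use s0 gpos in \<open>auto simp: F_def fnn\<close>)
    then have "((\<lambda>p. c * F (fst p) (snd p) powr \<gamma> * (\<alpha> * (sig (fst p) (snd p) powr (-1/\<gamma>) * sig (fst p) (snd p) powr (-\<alpha>) / sig (fst p) (snd p)) * (G (X (fst p) (snd p)) \<bullet> fst p)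
      + (F (fst p) (snd p) / \<gamma>) * (sig (fst p) (snd p) powr (-1/\<gamma>) / sig (fst p) (snd p)))) \<longlongrightarrow> 0) (at p0 within Sg)"
      using True gpos by simp
    note N0 = this
    have "((\<lambda>p. rt (fst p) (snd p)) \<longlongrightarrow> 0) (at p0 within Sg)"
      unfolding rt_def by (rule tends_quot_real[OF N0 ev_Sg_D])
    then show ?thesis using FF by simp
  qed
qed


lemma pde: assumes t: "0 \<le> t" "t < T"
  shows "rt x t - (1 + \<gamma>) * rho x t powr \<gamma> * (x \<bullet> gr x t) = d * rho x t powr (1 + \<gamma>)"
proof (cases "F x t = 0")
  case True
  note FF = F0_facts[OF t True]
  show ?thesis using FF gpos by simp
next
  case False
  have Fp: "F x t > 0" using False fnn[of "X x t"] unfolding F_def by simp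
  have sp: "sig x t > 0" using sig(1)[OF t] by simp
  have rp: "rho x t > 0" unfolding rho_def using Fp sp by simp
  have "(sig x t powr (-1/\<gamma>)) powr \<gamma> = sig x t powr ((-1/\<gamma>) * \<gamma>)" by (rule powr_powr)
  also have "\<dots> = sig x t powr (-1)" using gpos by simp
  also have "\<dots> = 1 / sig x t" using sp by (simp add: powr_minus_divide)
  finally have sgg: "(sig x t powr (-1/\<gamma>)) powr \<gamma> = 1 / sig x t" .
  have nn: "0 \<le> F x t" "0 \<le> sig x t powr (-1/\<gamma>)" using Fp by auto
  have "rho x t powr \<gamma> = F x t powr \<gamma> * (sig x t powr (-1/\<gamma>)) powr \<gamma>"
    unfolding rho_def by (rule powr_mult)
  then have rg: "rho x t powr \<gamma> = F x t powr \<gamma> / sig x t" unfolding sgg by simp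
  have r1: "rho x t powr (1 + \<gamma>) = rho x t * rho x t powr \<gamma>"
    using rp by (simp add: powr_add)
  have xg: "x \<bullet> gr x t = (sig x t powr (-1/\<gamma>) * sig x t powr (-\<alpha>) / sig x t / D x t) * (G (X x t) \<bullet> x)"
    unfolding gr_def by (simp add: inner_commute)
  have "rt x t - (1 + \<gamma>) * (F x t powr \<gamma> / sig x t) * ((sig x t powr (-1/\<gamma>) * sig x t powr (-\<alpha>) / sig x t / D x t) * (G (X x t) \<bullet> x))
      = d * (F x t * sig x t powr (-1/\<gamma>)) * (F x t powr \<gamma> / sig x t)"
    unfolding rt_def
  proof (rule alg2)
    show "F x t \<noteq> 0" "sig x t \<noteq> 0" "\<gamma> \<noteq> 0" using Fp sp gpos by auto
    show "D x t \<noteq> 0" using D_ge1[OF t, of x] by simp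
    show "D x t = 1 - c * t * \<gamma> * \<alpha> * (F x t powr \<gamma> / F x t) * (sig x t powr (-\<alpha>) / sig x t) * (G (X x t) \<bullet> x)"
      unfolding D_def ..
    show "c * t * F x t powr \<gamma> = 1 - sig x t" by (rule sig_eqn[OF t])
    show "c * \<alpha> = 1 + \<gamma>" by (rule c\<alpha>)
    show "c = \<gamma> * d" by (rule c_def)
  qed
  then show ?thesis unfolding rg r1 xg by (simp add: rho_def)
qed

lemma rho_init: "rho x 0 = f x"
  unfolding rho_def F_def X_def sig_0 by simp

lemma charac: assumes t: "0 \<le> t" "t < T"
  shows "rho (((1 - c * f x0 powr \<gamma> * t) powr \<alpha>) *\<^sub>R x0) t
       = f x0 * (1 - c * f x0 powr \<gamma> * t) powr (-1/\<gamma>)"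
proof -
  define s1 where "s1 = 1 - c * f x0 powr \<gamma> * t"
  have "c * f x0 powr \<gamma> * t \<le> c * M powr \<gamma> * t"
    using c_pos t fg_le by (intro mult_right_mono mult_left_mono) auto
  then have s1p: "s1 > 0" using ctM_lt[OF t] unfolding s1_def by (simp add: mult.commute mult.left_commute)
  have bk: "s1 powr (-\<alpha>) *\<^sub>R (s1 powr \<alpha> *\<^sub>R x0) = x0"
    using s1p by (simp add: powr_minus_divide)
  have "sig (s1 powr \<alpha> *\<^sub>R x0) t = s1"
    by (rule sig_eq[OF t s1p]) (unfold E_def bk, simp add: s1_def algebra_simps)
  then show ?thesis unfolding s1_def[symmetric] rho_def F_def X_def using bk by simp
qed


lemma blowup: "filterlim (\<lambda>p. rho (fst p) (snd p)) at_top (at (0, T) within Sg)"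
  unfolding filterlim_at_top
proof (intro allI)
  fix B :: real
  define B' where "B' = max B 1"
  have B': "B' \<ge> 1" "B' \<ge> B" unfolding B'_def by auto
  define m where "m = (M powr \<gamma> / 2) powr (1/\<gamma>)"
  have m: "m > 0" unfolding m_def using Mg_pos by simp
  define \<epsilon> where "\<epsilon> = min (1/2) ((m/B') powr \<gamma>)"
  have \<epsilon>: "\<epsilon> > 0" "\<epsilon> \<le> 1/2" "\<epsilon> \<le> (m/B') powr \<gamma>" unfolding \<epsilon>_def using m B' by auto
  define \<eta> where "\<eta> = M powr \<gamma> * \<epsilon> / 2"
  define \<tau> where "\<tau> = T * \<epsilon> / 2"
  have \<eta>: "\<eta> > 0" "\<eta> < M powr \<gamma>" unfolding \<eta>_def using \<epsilon> Mg_pos by auto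
  have \<tau>: "\<tau> > 0" "\<tau> \<le> T / 2" unfolding \<tau>_def using \<epsilon> T_pos by auto
  obtain \<delta> where \<delta>: "\<delta> > 0" and
    \<delta>f: "\<And>y. dist y 0 < \<delta> \<Longrightarrow> dist (f y powr \<gamma>) (f 0 powr \<gamma>) < \<eta>"
    using fg_cont \<eta> unfolding continuous_on_iff by (metis UNIV_I)
  define d where "d = min (\<delta> * \<epsilon> powr \<alpha>) \<tau>"
  have d: "d > 0" unfolding d_def using \<delta> \<epsilon> \<tau> by simp
  show "eventually (\<lambda>p. B \<le> rho (fst p) (snd p)) (at (0, T) within Sg)"
    unfolding eventually_at
  proof (intro exI[of _ d] conjI ballI impI)
    show "d > 0" by (rule d)
  next
    fix p assume pS: "p \<in> Sg" and pd: "p \<noteq> (0, T) \<and> dist p (0, T) < d"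
    obtain x t where p: "p = (x, t)" by (cases p)
    have t: "0 \<le> t" "t < T" using pS p by auto
    have nx: "norm x < \<delta> * \<epsilon> powr \<alpha>"
      using pd norm_fst_le[of x "t - T"] unfolding p d_def by (simp add: dist_norm)
    have nt: "T - t < \<tau>"
    proof -
      have "abs (t - T) < \<tau>" using pd norm_snd_le[of "t - T" x] unfolding p d_def by (simp add: dist_norm)
      then show ?thesis by arith
    qed
    have tpos: "t > 0" using nt \<tau> T_pos by simp
    define s where "s = sig x t"
    have sp: "s > 0" unfolding s_def using sig(1)[OF t] by simp
    have eqn: "c * t * F x t powr \<gamma> = 1 - s" unfolding s_def by (rule sig_eqn[OF t])
    have s\<epsilon>: "s < \<epsilon>"
    proof (rule ccontr)
      assume "\<not> s < \<epsilon>"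
      then have se: "\<epsilon> \<le> s" by simp
      have "s powr (-\<alpha>) \<le> \<epsilon> powr (-\<alpha>)" using se \<epsilon> \<alpha>_pos by (intro powr_mono2') auto
      then have "norm (X x t) \<le> \<epsilon> powr (-\<alpha>) * norm x" unfolding X_def s_def[symmetric]
        by (simp add: mult_right_mono)
      also have "\<dots> < \<epsilon> powr (-\<alpha>) * (\<delta> * \<epsilon> powr \<alpha>)" using nx \<epsilon> by simp
      also have "\<dots> = \<delta>" using \<epsilon> by (simp add: powr_minus_divide)
      finally have "dist (X x t) 0 < \<delta>" by simp
      from \<delta>f[OF this] have "F x t powr \<gamma> > M powr \<gamma> - \<eta>" unfolding F_def M_def dist_real_def by simp
      moreover have "t > T - \<tau>" using nt by simp
      ultimately have "(T - \<tau>) * (M powr \<gamma> - \<eta>) < t * F x t powr \<gamma>"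
        using \<eta> \<tau> tpos by (intro mult_strict_mono) auto
      then have "c * ((T - \<tau>) * (M powr \<gamma> - \<eta>)) < c * (t * F x t powr \<gamma>)"
        using c_pos by (rule mult_strict_left_mono)
      then have "c * t * F x t powr \<gamma> > c * (T - \<tau>) * (M powr \<gamma> - \<eta>)" by (simp add: mult.assoc)
      also have "c * (T - \<tau>) * (M powr \<gamma> - \<eta>) = (c * T * M powr \<gamma>) * (1 - \<epsilon>/2) * (1 - \<epsilon>/2)"
        unfolding \<tau>_def \<eta>_def by (simp add: field_simps)
      also have "\<dots> = (1 - \<epsilon>/2) * (1 - \<epsilon>/2)" using cTM by simp
      finally have "1 - s > (1 - \<epsilon>/2) * (1 - \<epsilon>/2)" using eqn by simp
      then have "s < \<epsilon> - \<epsilon> * \<epsilon> / 4" by (simp add: algebra_simps)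
      moreover have "\<epsilon> * \<epsilon> / 4 > 0" using \<epsilon> by simp
      ultimately show False using se by linarith
    qed
    have Fg_lb: "F x t powr \<gamma> \<ge> M powr \<gamma> / 2"
    proof -
      have "F x t powr \<gamma> = (1 - s) / (c * t)" using eqn c_pos tpos by (simp add: field_simps)
      moreover have "(1 - s) / (c * t) \<ge> (1/2) / (c * T)"
        using s\<epsilon> \<epsilon> c_pos tpos t by (intro frac_le) (auto intro!: mult_pos_pos)
      moreover have "(1/2) / (c * T) = M powr \<gamma> / 2" using cTM c_pos T_pos by (simp add: field_simps)
      ultimately show ?thesis by linarith
    qed
    have Fnn: "F x t \<ge> 0" unfolding F_def by (rule fnn)
    have Fm: "F x t \<ge> m"
    proof -
      have "m \<le> (F x t powr \<gamma>) powr (1/\<gamma>)" unfolding m_def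
        using Fg_lb Mg_pos gpos by (intro powr_mono2) auto
      also have "\<dots> = F x t" using Fnn gpos by (simp add: powr_powr)
      finally show ?thesis .
    qed
    have "s powr (-1/\<gamma>) \<ge> \<epsilon> powr (-1/\<gamma>)"
      using s\<epsilon> sp gpos by (intro powr_mono2') auto
    moreover have "\<epsilon> powr (-1/\<gamma>) \<ge> ((m/B') powr \<gamma>) powr (-1/\<gamma>)"
      using \<epsilon> gpos by (intro powr_mono2') auto
    moreover have "((m/B') powr \<gamma>) powr (-1/\<gamma>) = B' / m"
      using m B' gpos by (simp add: powr_powr powr_minus_divide)
    ultimately have sB: "s powr (-1/\<gamma>) \<ge> B' / m" by simp
    have "B \<le> m * (B' / m)" using m B' by simp
    also have "\<dots> \<le> F x t * s powr (-1/\<gamma>)"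
      using Fm sB m B' by (intro mult_mono) auto
    finally show "B \<le> rho (fst p) (snd p)" unfolding p rho_def s_def by simp
  qed
qed

end

theorem mainTheorem1:
  fixes f :: "real^'n \<Rightarrow> real" and \<gamma> :: real
  assumes "\<gamma> > 0"
    and "C1_fun f" and "bounded (range f)"
    and "\<forall>x. f x \<ge> 0" and "\<exists>x. f x \<noteq> 0"
    and "radial_nonincr f"
  defines "tstar \<equiv> 1 / (\<gamma> * real CARD('n) * (Sup (range f)) powr \<gamma>)"
  shows "\<exists>(\<rho> :: real^'n \<Rightarrow> real \<Rightarrow> real) \<rho>t gr\<rho>.
      C1_on_strip \<rho> \<rho>t gr\<rho> tstar \<and>
      (\<forall>x t. 0 \<le> t \<and> t < tstar \<longrightarrow>
          \<rho>t x t - (1 + \<gamma>) * (\<rho> x t) powr \<gamma> * (x \<bullet> gr\<rho> x t)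
            = real CARD('n) * (\<rho> x t) powr (1 + \<gamma>)) \<and>
      (\<forall>x. \<rho> x 0 = f x) \<and>
      (\<forall>x0 t. 0 \<le> t \<and> t < tstar \<longrightarrow>
          \<rho> (((1 - \<gamma> * real CARD('n) * (f x0) powr \<gamma> * t)
                  powr ((1 + \<gamma>) / (\<gamma> * real CARD('n)))) *\<^sub>R x0) t
            = f x0 * (1 - \<gamma> * real CARD('n) * (f x0) powr \<gamma> * t) powr (-1 / \<gamma>)) \<and>
      filterlim (\<lambda>(x,t). \<rho> x t) at_top (at (0, tstar) within (UNIV \<times> {0..<tstar}))"
proof -
  obtain G :: "real^'n \<Rightarrow> real^'n" where
    fder: "\<And>x. (f has_derivative (\<lambda>h. G x \<bullet> h)) (at x)" and Gc: "continuous_on UNIV G"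
    using assms(2) unfolding C1_fun_def by blast
  obtain ft :: "real \<Rightarrow> real" where ft: "\<And>x. f x = ft (norm x)"
    and ftm: "\<And>r s. 0 \<le> r \<Longrightarrow> r \<le> s \<Longrightarrow> ft s \<le> ft r"
    using assms(6) unfolding radial_nonincr_def by blast
  have fmono: "f y \<le> f x" if "norm x \<le> norm y" for x y
    unfolding ft using ftm[OF norm_ge_zero that] .
  obtain x1 where x1: "f x1 \<noteq> 0" using assms(5) by blast
  have "f x1 \<le> f 0" by (rule fmono) simp
  moreover have "f x1 > 0" using x1 assms(4) by (simp add: less_le)
  ultimately have f0: "f 0 > 0" by linarith
  have Sup: "Sup (range f) = f 0"
    by (rule cSup_eq_maximum) (auto intro: fmono)
  have tst: "tstar = 1 / (\<gamma> * real CARD('n) * f 0 powr \<gamma>)" unfolding tstar_def Sup ..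
  interpret R: rad f \<gamma> G "real CARD('n)" "\<gamma> * real CARD('n)" "(1 + \<gamma>) / (\<gamma> * real CARD('n))" "f 0" tstar
    by unfold_locales (use assms(1,4) fder Gc fmono f0 tst in auto)
  show ?thesis
  proof (intro exI conjI allI impI)
    show "C1_on_strip R.rho R.rt R.gr tstar"
      unfolding C1_on_strip_def case_prod_unfold
    proof (intro conjI allI impI)
      fix x t assume t: "0 \<le> t \<and> t < tstar"
      show "((\<lambda>p. R.rho (fst p) (snd p)) has_derivative (\<lambda>p. R.gr x t \<bullet> fst p + R.rt x t * snd p))
          (at (x, t) within UNIV \<times> {0..<tstar})"
      proof (cases "R.F x t = 0")
        case True then show ?thesis using t by (intro R.rho_deriv_zero[of t x]) auto
      next
        case False
        then have "R.F x t > 0" using assms(4) unfolding R.F_def by (simp add: less_le)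
        then show ?thesis using t by (intro R.rho_deriv_pos[of t x]) auto
      qed
    next
      show "continuous_on (UNIV \<times> {0..<tstar}) (\<lambda>p. R.rt (fst p) (snd p))" by (rule R.rt_cont)
      show "continuous_on (UNIV \<times> {0..<tstar}) (\<lambda>p. R.gr (fst p) (snd p))" by (rule R.gr_cont)
    qed
  next
    fix x t assume t: "0 \<le> t \<and> t < tstar"
    show "R.rt x t - (1 + \<gamma>) * R.rho x t powr \<gamma> * (x \<bullet> R.gr x t) = real CARD('n) * R.rho x t powr (1 + \<gamma>)"
      using t by (intro R.pde) auto
  next
    fix x show "R.rho x 0 = f x" by (rule R.rho_init)
  next
    fix x0 t assume t: "0 \<le> t \<and> t < tstar"
    show "R.rho (((1 - \<gamma> * real CARD('n) * (f x0) powr \<gamma> * t)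
                  powr ((1 + \<gamma>) / (\<gamma> * real CARD('n)))) *\<^sub>R x0) t
            = f x0 * (1 - \<gamma> * real CARD('n) * (f x0) powr \<gamma> * t) powr (-1 / \<gamma>)"
      using t by (intro R.charac) auto
  next
    show "filterlim (\<lambda>(x,t). R.rho x t) at_top (at (0, tstar) within (UNIV \<times> {0..<tstar}))"
      unfolding case_prod_unfold by (rule R.blowup)
  qed
qed

end
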